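(* Let $n\ge 1$, $k\ge 2$, $m\ge 1$ be integers and let $P_* \in \mathrm{Hom}(\Gamma_{n,k},\mathcal{D}(\mathbb{R}^m,0))$ satisfy $D^{(1)}_0P_*^a = k^{-1}I$ and $D^{(1)}_0P_*^{b_i}=I$ for all $i=1,\dots,n$. Then there exists a $C^1_{loc}$-neighborhood $\mathcal{U}$ of $P_*$ in $\mathrm{Hom}(\Gamma_{n,k},\mathcal{D}(\mathbb{R}^m,0))$ such that $D^{(1)}_0P^{b_i} = I$ for all $P\in\mathcal{U}$ and all $i=1,\dots,n$.
   Context: $\Gamma_{n,k} = \langle a, b_1,\dots,b_n \mid a b_i a^{-1} = b_i^k,\ b_i b_j = b_j b_i\rangle$. $\mathcal{D}(\mathbb{R}^m,0)$ is the group of germs at $0$ of local diffeomorphisms of $\mathbb{R}^m$ fixing $0$; $D^{(1)}_0F$ is the derivative at $0$. The $C^1_{loc}$-topology on $\mathcal{D}(\mathbb{R}^m,0)$ is given by the pseudo-distance $d(F,G)=\|D^{(1)}_0F-D^{(1)}_0G\|$ (operator norm), and $\mathrm{Hom}(\Gamma_{n,k},\mathcal{D}(\mathbb{R}^m,0))$ carries the induced product topology (convergence of $P^\gamma$ for each $\gamma$). We write $P^\gamma=P(\gamma)$. *)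

theory Defs
  imports "HOL-Analysis.Analysis"
begin

text \<open>Germs at 0 of local diffeomorphisms of R^m fixing 0, represented by
representative maps. Dimension m is the (finite, nonempty) index type 'm.\<close>

definition local_diffeo :: "(real^'m \<Rightarrow> real^'m) \<Rightarrow> bool" where
  "local_diffeo F \<longleftrightarrow> F 0 = 0 \<and>
     (\<exists>U V G. open U \<and> 0 \<in> U \<and> open V \<and> homeomorphism U V F G \<and>
        (\<forall>x\<in>U. F differentiable (at x)) \<and> (\<forall>y\<in>V. G differentiable (at y)))"

definition germ_eq :: "(real^'m \<Rightarrow> real^'m) \<Rightarrow> (real^'m \<Rightarrow> real^'m) \<Rightarrow> bool" where
  "germ_eq F G \<longleftrightarrow> (\<forall>\<^sub>F x in nhds 0. F x = G x)"

definition germ_inv :: "(real^'m \<Rightarrow> real^'m) \<Rightarrow> (real^'m \<Rightarrow> real^'m)" where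
  "germ_inv F = (SOME G. local_diffeo G \<and> germ_eq (F \<circ> G) id \<and> germ_eq (G \<circ> F) id)"

definition D0 :: "(real^'m \<Rightarrow> real^'m) \<Rightarrow> (real^'m \<Rightarrow> real^'m)" where
  "D0 F = frechet_derivative F (at 0)"

text \<open>The C^1_loc pseudo-distance d(F,G) = operator norm of D0 F - D0 G.\<close>
definition dC1 :: "(real^'m \<Rightarrow> real^'m) \<Rightarrow> (real^'m \<Rightarrow> real^'m) \<Rightarrow> real" where
  "dC1 F G = onorm (\<lambda>x. D0 F x - D0 G x)"

text \<open>A homomorphism Gamma_{n,k} \<rightarrow> D(R^m,0) is given by the images (fa, fb i), i < n,
 of the generators a, b_1..b_n (b_{i+1} is indexed by i), which are germs of local
 diffeomorphisms satisfying the defining relations as germs: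
 a b_i a^{-1} = b_i^k (written as a b_i = b_i^k a) and b_i b_j = b_j b_i.\<close>
definition is_hom :: "nat \<Rightarrow> nat \<Rightarrow> (real^'m \<Rightarrow> real^'m) \<Rightarrow> (nat \<Rightarrow> real^'m \<Rightarrow> real^'m) \<Rightarrow> bool" where
  "is_hom n k fa fb \<longleftrightarrow> local_diffeo fa \<and> (\<forall>i<n. local_diffeo (fb i)) \<and>
     (\<forall>i<n. germ_eq (fa \<circ> fb i) ((fb i ^^ k) \<circ> fa)) \<and>
     (\<forall>i<n. \<forall>j<n. germ_eq (fb i \<circ> fb j) (fb j \<circ> fb i))"

text \<open>Elements of Gamma_{n,k} are represented by words in the generators and their
 inverses: a letter (None, e) is a^(+-1), (Some i, e) is b_i^(+-1); e = True means exponent +1.\<close>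
definition valid_word :: "nat \<Rightarrow> (nat option \<times> bool) list \<Rightarrow> bool" where
  "valid_word n w \<longleftrightarrow> (\<forall>x\<in>set w. \<forall>i. fst x = Some i \<longrightarrow> i < n)"

fun gen_map :: "(real^'m \<Rightarrow> real^'m) \<Rightarrow> (nat \<Rightarrow> real^'m \<Rightarrow> real^'m) \<Rightarrow> nat option \<times> bool \<Rightarrow> (real^'m \<Rightarrow> real^'m)" where
  "gen_map fa fb (None, e) = (if e then fa else germ_inv fa)"
| "gen_map fa fb (Some i, e) = (if e then fb i else germ_inv (fb i))"

fun eval_word :: "(real^'m \<Rightarrow> real^'m) \<Rightarrow> (nat \<Rightarrow> real^'m \<Rightarrow> real^'m) \<Rightarrow> (nat option \<times> bool) list \<Rightarrow> (real^'m \<Rightarrow> real^'m)" where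
  "eval_word fa fb [] = id"
| "eval_word fa fb (x # w) = gen_map fa fb x \<circ> eval_word fa fb w"

text \<open>U is a neighbourhood of P = (fa, fb) in Hom(Gamma_{n,k}, D(R^m,0)) with the product
 topology induced by the C^1_loc pseudo-distance: U consists of homomorphisms and contains a
 basic open set {Q. d(Q^gamma, P^gamma) < eps for gamma in a finite set}.\<close>
definition C1loc_nbhd :: "nat \<Rightarrow> nat \<Rightarrow> (real^'m \<Rightarrow> real^'m) \<Rightarrow> (nat \<Rightarrow> real^'m \<Rightarrow> real^'m)
     \<Rightarrow> ((real^'m \<Rightarrow> real^'m) \<times> (nat \<Rightarrow> real^'m \<Rightarrow> real^'m)) set \<Rightarrow> bool" where
  "C1loc_nbhd n k fa fb U \<longleftrightarrow> U \<subseteq> {(ga, gb). is_hom n k ga gb} \<and>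
     (\<exists>W \<epsilon>. finite W \<and> (\<forall>w\<in>W. valid_word n w) \<and> \<epsilon> > 0 \<and>
        {(ga, gb). is_hom n k ga gb \<and>
           (\<forall>w\<in>W. dC1 (eval_word ga gb w) (eval_word fa fb w) < \<epsilon>)} \<subseteq> U)"

end

theory Submission
  imports Defs
begin

lemma bl_funpow: "bounded_linear (B::'a::real_normed_vector \<Rightarrow> 'a) \<Longrightarrow> bounded_linear (B ^^ j)"
proof (induction j)
  case 0 have "bounded_linear (id :: 'a \<Rightarrow> 'a)" by (simp add: id_def)
  then show ?case by simp
next
  case (Suc j) then show ?case using bounded_linear_compose[of B "B ^^ j"] by (simp add: comp_def)
qed

lemma blc: "bounded_linear f \<Longrightarrow> bounded_linear g \<Longrightarrow> bounded_linear (f \<circ> g)"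
  using bounded_linear_compose[of f g] by (simp add: comp_def)

lemma core:
  fixes A B :: "'a::{real_normed_vector, perfect_space} \<Rightarrow> 'a" and k :: nat
  assumes blA: "bounded_linear A" and blB: "bounded_linear B" and k2: "k \<ge> 2"
    and rel: "A \<circ> B = (B ^^ k) \<circ> A"
    and hA: "onorm (\<lambda>x. A x - inverse (real k) *\<^sub>R x) < 1 / (4 * (real k + 1))"
    and hB: "onorm (\<lambda>x. B x - x) < 1 / (4 * 2 ^ k)"
  shows "B = id"
proof -
  define K where "K = real k"
  have K2: "K \<ge> 2" using k2 by (simp add: K_def)
  define \<delta> where "\<delta> = 1 / (4 * (K + 1))"
  define E where "E = (\<lambda>x. B x - x)"
  define e0 where "e0 = onorm E"
  have blE: "bounded_linear E" unfolding E_def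
    by (intro bounded_linear_sub blB bounded_linear_ident)
  have e0ge: "e0 \<ge> 0" unfolding e0_def by (rule onorm_pos_le[OF blE])
  have p2: "(2::real) ^ k \<ge> 1" by simp
  have e0lt: "e0 < 1 / (4 * 2 ^ k)" using hB by (simp add: e0_def E_def)
  have e0s: "2 ^ k * e0 \<le> 1/4" using e0lt p2 by (simp add: field_simps)
  have "2 ^ k * e0 \<ge> 1 * e0" using p2 e0ge by (intro mult_right_mono) auto
  hence e01: "e0 \<le> 1/4" using e0s by linarith
  have oB: "onorm B \<le> 2"
  proof -
    have "onorm B = onorm (\<lambda>x. E x + x)" by (simp add: E_def)
    also have "\<dots> \<le> e0 + onorm (\<lambda>x::'a. x)" unfolding e0_def
      using onorm_triangle[OF blE bounded_linear_ident] by simp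
    also have "\<dots> \<le> 2" using onorm_id_le[where 'a='a] e01 by linarith
    finally show ?thesis .
  qed
  define R where "R = (\<lambda>j x. (B ^^ j) x - x)"
  have blR: "bounded_linear (R j)" for j unfolding R_def
    by (intro bounded_linear_sub bl_funpow blB bounded_linear_ident)
  have lBj: "linear (B ^^ j)" for j using bl_funpow[OF blB] bounded_linear.linear by blast
  have lB: "linear B" using blB bounded_linear.linear by blast
  have Rb: "onorm (R j) \<le> (2 ^ j - 1) * e0" for j
  proof (induction j)
    case 0 then show ?case by (simp add: R_def onorm_zero)
  next
    case (Suc j)
    have eq: "R (Suc j) = (\<lambda>x. (B \<circ> R j) x + E x)"
      by (auto simp: R_def E_def fun_eq_iff linear_diff[OF lB])
    have "onorm (R (Suc j)) \<le> onorm (B \<circ> R j) + e0" unfolding eq e0_def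
      by (intro onorm_triangle blE blc[OF blB blR[of j]])
    also have "\<dots> \<le> onorm B * onorm (R j) + e0"
      using onorm_compose[OF blB blR[of j]] by linarith
    also have "\<dots> \<le> 2 * ((2 ^ j - 1) * e0) + e0"
      using Suc oB onorm_pos_le[OF blB] onorm_pos_le[OF blR[of j]]
      by (intro add_right_mono mult_mono) auto
    also have "\<dots> = (2 ^ Suc j - 1) * e0" by (simp add: algebra_simps)
    finally show ?case .
  qed
  define T where "T = (\<lambda>j x. (B ^^ j) x - x - real j *\<^sub>R E x)"
  have blT: "bounded_linear (T j)" for j unfolding T_def
    by (intro bounded_linear_sub bl_funpow blB bounded_linear_ident bounded_linear_compose[OF bounded_linear_scaleR_right blE])
  have Tb: "onorm (T j) \<le> 2 ^ j * e0 ^ 2" for j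
  proof (induction j)
    case 0 then show ?case by (simp add: T_def onorm_zero)
  next
    case (Suc j)
    have eq: "T (Suc j) = (\<lambda>x. T j x + (R j \<circ> E) x)"
      by (auto simp: T_def R_def E_def fun_eq_iff funpow_swap1 linear_diff[OF lBj]
          algebra_simps)
    have "onorm (T (Suc j)) \<le> onorm (T j) + onorm (R j \<circ> E)" unfolding eq
      by (intro onorm_triangle blT blc[OF blR[of j] blE])
    also have "\<dots> \<le> onorm (T j) + onorm (R j) * e0"
      using onorm_compose[OF blR[of j] blE] by (simp add: e0_def)
    also have "\<dots> \<le> 2 ^ j * e0 ^ 2 + ((2 ^ j - 1) * e0) * e0"
      using Suc Rb[of j] e0ge by (intro add_mono mult_right_mono) auto
    also have "\<dots> \<le> 2 ^ Suc j * e0 ^ 2" using e0ge by (simp add: algebra_simps power2_eq_square)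
    finally show ?case .
  qed
  have Rk: "onorm (R k) \<ge> (K - 1/4) * e0"
  proof -
    have "(\<lambda>x. real k *\<^sub>R E x) = (\<lambda>x. R k x + - T k x)"
      by (auto simp: R_def T_def fun_eq_iff)
    hence "K * e0 = onorm (\<lambda>x. R k x + - T k x)"
      using onorm_scaleR[OF blE, of "real k"] by (simp add: K_def e0_def)
    also have "\<dots> \<le> onorm (R k) + onorm (\<lambda>x. - T k x)"
      by (intro onorm_triangle blR bounded_linear_minus blT)
    also have "\<dots> \<le> onorm (R k) + 2 ^ k * e0 ^ 2" using Tb[of k] by (simp add: onorm_neg)
    also have "2 ^ k * e0 ^ 2 \<le> (1/4) * e0"
    proof -
      have "(2 ^ k * e0) * e0 \<le> (1/4) * e0" using e0s e0ge by (rule mult_right_mono)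
      thus ?thesis by (simp add: power2_eq_square mult.assoc)
    qed
    finally show ?thesis by (simp add: algebra_simps)
  qed
  define D where "D = (\<lambda>x. A x - inverse K *\<^sub>R x)"
  have blD: "bounded_linear D" unfolding D_def
    by (intro bounded_linear_sub blA bounded_linear_scaleR_right bounded_linear_ident)
  have oD: "onorm D < \<delta>" using hA by (simp add: D_def \<delta>_def K_def)
  have dpos: "\<delta> > 0" using K2 by (simp add: \<delta>_def)
  have oA: "onorm A \<le> inverse K + \<delta>"
  proof -
    have "onorm A = onorm (\<lambda>x. D x + inverse K *\<^sub>R x)" by (simp add: D_def)
    also have "\<dots> \<le> onorm D + onorm (\<lambda>x::'a. inverse K *\<^sub>R x)"
      by (intro onorm_triangle blD bounded_linear_scaleR_right bounded_linear_ident)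
    also have "onorm (\<lambda>x::'a. inverse K *\<^sub>R x) \<le> inverse K"
    proof -
      have i: "bounded_linear (\<lambda>x::'a. x)" by (rule bounded_linear_ident)
      have "onorm (\<lambda>x::'a. inverse K *\<^sub>R x) = \<bar>inverse K\<bar> * onorm (\<lambda>x::'a. x)"
        by (rule onorm_scaleR[OF i])
      thus ?thesis using onorm_id[where 'a='a] K2 by simp
    qed
    finally show ?thesis using oD by linarith
  qed
  have AE: "A \<circ> E = R k \<circ> A"
  proof -
    have lA: "linear A" using blA bounded_linear.linear by blast
    have "A (B x) = (B ^^ k) (A x)" for x using rel by (metis comp_apply)
    thus ?thesis by (auto simp: E_def R_def fun_eq_iff linear_diff[OF lA])
  qed
  have up: "onorm (R k \<circ> A) \<le> (inverse K + \<delta>) * e0"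
  proof -
    have "onorm (R k \<circ> A) = onorm (A \<circ> E)" using AE by simp
    also have "\<dots> \<le> onorm A * e0" using onorm_compose[OF blA blE] by (simp add: e0_def)
    also have "\<dots> \<le> (inverse K + \<delta>) * e0" using oA e0ge by (rule mult_right_mono)
    finally show ?thesis .
  qed
  have lo: "inverse K * onorm (R k) \<le> onorm (R k \<circ> A) + onorm (R k) * \<delta>"
  proof -
    have lR: "linear (R k)" using blR[of k] bounded_linear.linear by blast
    have "(\<lambda>x. inverse K *\<^sub>R R k x) = (\<lambda>x. (R k \<circ> A) x + - (R k \<circ> D) x)"
      by (auto simp: fun_eq_iff D_def linear_diff[OF lR] linear_scale[OF lR])
    hence "inverse K * onorm (R k) = onorm (\<lambda>x. (R k \<circ> A) x + - (R k \<circ> D) x)"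
      using onorm_scaleR[OF blR[of k], of "inverse K"] K2 by simp
    also have "\<dots> \<le> onorm (R k \<circ> A) + onorm (\<lambda>x. - (R k \<circ> D) x)"
      by (intro onorm_triangle bounded_linear_minus blc blR blA blD)
    also have "onorm (\<lambda>x. - (R k \<circ> D) x) \<le> onorm (R k) * \<delta>"
    proof -
      have "onorm (\<lambda>x. - (R k \<circ> D) x) = onorm (R k \<circ> D)" by (rule onorm_neg)
      also have "\<dots> \<le> onorm (R k) * onorm D" by (rule onorm_compose[OF blR[of k] blD])
      also have "\<dots> \<le> onorm (R k) * \<delta>" using oD onorm_pos_le[OF blR[of k]]
        by (intro mult_left_mono) auto
      finally show ?thesis .
    qed
    finally show ?thesis by (simp add: comp_def)
  qed
  have c: "(inverse K - \<delta>) * (K - 1/4) - (inverse K + \<delta>) > 0"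
  proof -
    have "\<delta> * (K + 3/4) < 1/4" using K2 by (simp add: \<delta>_def field_simps)
    moreover have "5 / (4*K) \<le> 5/8" using K2 by (simp add: field_simps)
    moreover have "(inverse K - \<delta>) * (K - 1/4) - (inverse K + \<delta>) = 1 - 5/(4*K) - \<delta> * (K + 3/4)"
      using K2 by (simp add: field_simps)
    ultimately show ?thesis by linarith
  qed
  have ikd: "inverse K - \<delta> \<ge> 0" using K2 by (simp add: \<delta>_def field_simps)
  have "(inverse K - \<delta>) * ((K - 1/4) * e0) \<le> (inverse K - \<delta>) * onorm (R k)"
    using Rk ikd by (rule mult_left_mono)
  also have "\<dots> \<le> (inverse K + \<delta>) * e0" using lo up by (simp add: algebra_simps)
  finally have "((inverse K - \<delta>) * (K - 1/4) - (inverse K + \<delta>)) * e0 \<le> 0"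
    by (simp add: algebra_simps)
  hence "e0 \<le> 0" using c by (simp add: mult_le_0_iff)
  hence "e0 = 0" using e0ge by simp
  hence "\<forall>x. E x = 0" using onorm_eq_0[OF blE] by (simp add: e0_def)
  thus ?thesis by (auto simp: E_def fun_eq_iff)
qed


lemma ld_deriv:
  assumes "local_diffeo F"
  shows "(F has_derivative D0 F) (at 0)" "F 0 = 0"
proof -
  from assms obtain U V G where "0 \<in> U" "\<forall>x\<in>U. F differentiable (at x)"
    unfolding local_diffeo_def by blast
  hence "F differentiable (at 0)" by blast
  thus "(F has_derivative D0 F) (at 0)" unfolding D0_def by (simp add: frechet_derivative_works[symmetric])
  show "F 0 = 0" using assms unfolding local_diffeo_def by blast
qed

lemma pow_deriv:
  fixes g :: "real^'m \<Rightarrow> real^'m"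
  assumes "(g has_derivative G) (at 0)" "g 0 = 0"
  shows "((g ^^ j) has_derivative G ^^ j) (at 0) \<and> (g ^^ j) 0 = 0"
proof (induction j)
  case 0 then show ?case by (simp add: has_derivative_ident[unfolded id_def[symmetric]] id_def)
next
  case (Suc j)
  then have "((g \<circ> g ^^ j) has_derivative (G \<circ> G ^^ j)) (at 0)"
    using assms by (intro diff_chain_at) auto
  then show ?case using Suc assms by (simp add: comp_def)
qed

lemma germ_deriv_eq:
  fixes f g :: "real^'m \<Rightarrow> real^'m"
  assumes "germ_eq f g" "(f has_derivative F) (at 0)" "(g has_derivative G) (at 0)"
  shows "F = G"
proof -
  from assms(1) obtain S where S: "open S" "0 \<in> S" "\<forall>x\<in>S. f x = g x"
    unfolding germ_eq_def eventually_nhds by blast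
  have "(g has_derivative F) (at 0)"
    using has_derivative_transform_within_open[OF assms(2) S(1) S(2)] S(3) by auto
  thus ?thesis using assms(3) has_derivative_unique by blast
qed

theorem lemma2p2:
  fixes fa :: "real^'m \<Rightarrow> real^'m" and fb :: "nat \<Rightarrow> real^'m \<Rightarrow> real^'m" and n k :: nat
  assumes "n \<ge> 1" and "k \<ge> 2"
    and "is_hom n k fa fb"
    and "D0 fa = (\<lambda>x. inverse (real k) *\<^sub>R x)"
    and "\<forall>i<n. D0 (fb i) = id"
  shows "\<exists>U. C1loc_nbhd n k fa fb U \<and>
           (\<forall>(ga, gb)\<in>U. \<forall>i<n. D0 (gb i) = id)"
proof -
  define \<epsilon> :: real where "\<epsilon> = min (1 / (4 * (real k + 1))) (1 / (4 * 2 ^ k))"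
  have epos: "\<epsilon> > 0" unfolding \<epsilon>_def by simp
  define W where "W = insert [(None, True)] ((\<lambda>i. [(Some i, True)]) ` {..<n})"
  define U where "U = {(ga, gb). is_hom n k ga gb \<and>
           (\<forall>w\<in>W. dC1 (eval_word ga gb w) (eval_word fa fb w) < \<epsilon>)}"
  have "C1loc_nbhd n k fa fb U"
    unfolding C1loc_nbhd_def
  proof (intro conjI)
    show "U \<subseteq> {(ga, gb). is_hom n k ga gb}" unfolding U_def by auto
    show "\<exists>W \<epsilon>. finite W \<and> (\<forall>w\<in>W. valid_word n w) \<and> \<epsilon> > 0 \<and>
        {(ga, gb). is_hom n k ga gb \<and>
           (\<forall>w\<in>W. dC1 (eval_word ga gb w) (eval_word fa fb w) < \<epsilon>)} \<subseteq> U"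
      by (rule exI[of _ W], rule exI[of _ \<epsilon>])
         (auto simp: W_def valid_word_def epos U_def)
  qed
  moreover have "\<forall>(ga, gb)\<in>U. \<forall>i<n. D0 (gb i) = id"
  proof (clarify)
    fix ga gb i assume gU: "(ga, gb) \<in> U" and i: "i < n"
    have hom: "is_hom n k ga gb" using gU by (simp add: U_def)
    have ha: "local_diffeo ga" "local_diffeo (gb i)" "germ_eq (ga \<circ> gb i) ((gb i ^^ k) \<circ> ga)"
      using hom i unfolding is_hom_def by auto
    have da: "(ga has_derivative D0 ga) (at 0)" "ga 0 = 0" using ld_deriv[OF ha(1)] by auto
    have db: "(gb i has_derivative D0 (gb i)) (at 0)" "gb i 0 = 0" using ld_deriv[OF ha(2)] by auto
    have d1: "((ga \<circ> gb i) has_derivative (D0 ga \<circ> D0 (gb i))) (at 0)"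
      using db da by (intro diff_chain_at) auto
    have pk: "((gb i ^^ k) has_derivative D0 (gb i) ^^ k) (at 0)" "(gb i ^^ k) 0 = 0"
      using pow_deriv[OF db] by auto
    have d2: "(((gb i ^^ k) \<circ> ga) has_derivative (D0 (gb i) ^^ k \<circ> D0 ga)) (at 0)"
      using pk da by (intro diff_chain_at) auto
    have rel: "D0 ga \<circ> D0 (gb i) = D0 (gb i) ^^ k \<circ> D0 ga"
      by (rule germ_deriv_eq[OF ha(3) d1 d2])
    have "[(None, True)] \<in> W" "[(Some i, True)] \<in> W" using i by (auto simp: W_def)
    hence "dC1 ga fa < \<epsilon>" "dC1 (gb i) (fb i) < \<epsilon>" using gU by (auto simp: U_def)
    hence hA: "onorm (\<lambda>x. D0 ga x - inverse (real k) *\<^sub>R x) < 1 / (4 * (real k + 1))"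
      and hB: "onorm (\<lambda>x. D0 (gb i) x - x) < 1 / (4 * 2 ^ k)"
      using assms(4) assms(5) i by (auto simp: dC1_def \<epsilon>_def)
    show "D0 (gb i) = id"
      by (rule core[OF has_derivative_bounded_linear[OF da(1)] has_derivative_bounded_linear[OF db(1)]
            assms(2) rel hA hB])
  qed
  ultimately show ?thesis by blast
qed

end
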